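(* Let $M_G$ be a mixed graph of order $n$ such that $N(M_G)$ has rank $2$. Then $M_G$ is switching equivalent to the (undirected) graph $K_{a,b}\cup tK_1$ for some integers $a,b\ge1$, $t\ge0$.
   Context: A mixed graph $M_G$ is obtained from a finite simple graph $G$ by orienting the edges of some subset of $E(G)$. With $\omega=\frac{1+\mathbf{i}\sqrt3}{2}$, $N(M_G)$ has $(u,v)$-entry $\omega$ if $\overrightarrow{uv}$ is an arc, $\bar\omega$ if $\overrightarrow{vu}$ is an arc, $1$ for an undirected edge, $0$ otherwise. $\mathbb{T}_6=\{1,-1,\omega,\bar\omega,-\omega,-\bar\omega\}$. Given a partition $V(M_G)=\bigcup_{j\in\mathbb{T}_6}V_j$ into six possibly empty sets, an edge or arc $xy$ has type $(j,k)$ if $x\in V_j,y\in V_k$ (arcs directed from $x$ to $y$). The partition is admissible if every undirected edge has type $(j,j)$ or $(j,\omega j)$, and every arc has type $(j,j)$, $(j,\bar\omega j)$ or $(j,-\omega j)$, for some $j$. A three-way switching w.r.t. an admissible partition replaces each undirected edge of type $(j,\omega j)$ by an arc from $V_j$ to $V_{\omega j}$, replaces each arc of type $(j,\bar\omega j)$ by an undirected edge, and reverses each arc of type $(j,-\omega j)$. The converse of a mixed graph reverses all arcs. Two mixed graphs are switching equivalent if one is obtained from the other by a sequence of three-way switchings and taking converses. $K_{a,b}\cup tK_1$ is the complete bipartite graph $K_{a,b}$ together with $t$ isolated vertices. *)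

theory Defs
  imports "HOL-Analysis.Analysis"
begin

text \<open>A mixed graph on the finite vertex type 'v: a pair (U, A) where U is the
 (symmetric, irreflexive) relation of undirected edges and A u v means there is an
 arc from u to v.\<close>

type_synonym 'v mgraph = "('v \<Rightarrow> 'v \<Rightarrow> bool) \<times> ('v \<Rightarrow> 'v \<Rightarrow> bool)"

definition mixed_graph :: "'v mgraph \<Rightarrow> bool" where
  "mixed_graph G \<longleftrightarrow>
     (\<forall>u v. fst G u v \<longrightarrow> fst G v u) \<and> (\<forall>u. \<not> fst G u u) \<and> (\<forall>u. \<not> snd G u u) \<and>
     (\<forall>u v. snd G u v \<longrightarrow> \<not> snd G v u \<and> \<not> fst G u v)"

definition omega :: complex where
  "omega = Complex (1/2) (sqrt 3 / 2)"

definition T6 :: "complex set" where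
  "T6 = {1, -1, omega, cnj omega, -omega, -cnj omega}"

definition Nmat :: "('v::finite) mgraph \<Rightarrow> complex^'v^'v" where
  "Nmat G = (\<chi> u v. if snd G u v then omega else if snd G v u then cnj omega
                      else if fst G u v then 1 else 0)"

text \<open>A partition of the vertices into the six sets V_j (j in T6) is given by the
 map p with p x = j iff x in V_j.\<close>

definition admissible :: "('v \<Rightarrow> complex) \<Rightarrow> 'v mgraph \<Rightarrow> bool" where
  "admissible p G \<longleftrightarrow> (\<forall>x. p x \<in> T6) \<and>
     (\<forall>x y. fst G x y \<longrightarrow> p x = p y \<or> p y = omega * p x \<or> p x = omega * p y) \<and>
     (\<forall>x y. snd G x y \<longrightarrow> p y = p x \<or> p y = cnj omega * p x \<or> p y = - omega * p x)"

definition three_way_switch :: "('v \<Rightarrow> complex) \<Rightarrow> 'v mgraph \<Rightarrow> 'v mgraph" where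
  "three_way_switch p G =
    ((\<lambda>x y. (fst G x y \<and> \<not> (p y = omega * p x) \<and> \<not> (p x = omega * p y))
          \<or> (snd G x y \<and> p y = cnj omega * p x)
          \<or> (snd G y x \<and> p x = cnj omega * p y)),
     (\<lambda>x y. (snd G x y \<and> p y = p x)
          \<or> (fst G x y \<and> p y = omega * p x)
          \<or> (snd G y x \<and> p x = - omega * p y)))"

definition mconverse :: "'v mgraph \<Rightarrow> 'v mgraph" where
  "mconverse G = (fst G, \<lambda>x y. snd G y x)"

definition switch_step :: "'v mgraph \<Rightarrow> 'v mgraph \<Rightarrow> bool" where
  "switch_step G H \<longleftrightarrow> (\<exists>p. admissible p G \<and> H = three_way_switch p G) \<or> H = mconverse G"

definition switching_equivalent :: "'v mgraph \<Rightarrow> 'v mgraph \<Rightarrow> bool" where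
  "switching_equivalent G H \<longleftrightarrow> switch_step\<^sup>*\<^sup>* G H \<or> switch_step\<^sup>*\<^sup>* H G"

text \<open>The undirected graph K_{|X|,|Y|} together with isolated vertices UNIV - X - Y.\<close>
definition Kbip_iso :: "'v set \<Rightarrow> 'v set \<Rightarrow> 'v mgraph" where
  "Kbip_iso X Y = ((\<lambda>x y. (x \<in> X \<and> y \<in> Y) \<or> (x \<in> Y \<and> y \<in> X)), (\<lambda>x y. False))"

end

theory Submission
  imports Defs
begin

definition S6 :: "complex set" where "S6 = {1, omega, cnj omega}"

lemma Re_om[simp]: "Re omega = 1/2" and Im_om[simp]: "Im omega = sqrt 3 / 2"
  by (simp_all add: omega_def)
lemma s3: "sqrt 3 * sqrt 3 = (3::real)" by simp
lemma om_mult: "omega * cnj omega = 1"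
  by (simp add: complex_eq_iff s3)
lemma om_sq: "omega * omega = - cnj omega"
  by (simp add: complex_eq_iff s3)
lemma omc_sq: "cnj omega * cnj omega = - omega"
  by (simp add: complex_eq_iff s3)
lemma om_ne: "omega \<noteq> 0" "omega \<noteq> 1" "cnj omega \<noteq> 1" "cnj omega \<noteq> - omega"
  "omega \<noteq> cnj omega"
  by (simp_all add: complex_eq_iff)
lemma S6_unit: "z \<in> S6 \<Longrightarrow> z * cnj z = 1"
  using om_mult by (auto simp: S6_def mult.commute)
lemma S6_unit': "z \<in> S6 \<Longrightarrow> cnj z * z = 1"
  using S6_unit by (simp add: mult.commute)
lemma S6_nz: "z \<in> S6 \<Longrightarrow> z \<noteq> 0"
  using S6_unit by force
lemma S6_cnj: "z \<in> S6 \<Longrightarrow> cnj z \<in> S6"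
  by (auto simp: S6_def)
lemma om3: "omega * omega * omega = -1" by (simp add: om_sq mult.commute om_mult)
lemma Re3: "a \<in> S6 \<Longrightarrow> b \<in> S6 \<Longrightarrow> c \<in> S6 \<Longrightarrow> Re (a*b*c) \<noteq> 0"
  unfolding S6_def
  by (auto simp: om_mult om_sq omc_sq mult.assoc mult.left_commute[of _ omega] mult.commute[of _ omega] om3)
lemma T6_2: "a \<in> S6 \<Longrightarrow> b \<in> S6 \<Longrightarrow> a*b \<in> T6"
  by (auto simp: S6_def T6_def om_mult om_sq omc_sq mult.commute)
lemma one_S6: "1 \<in> S6" by (simp add: S6_def)
lemma T6_1: "a \<in> S6 \<Longrightarrow> a \<in> T6"
  by (auto simp: S6_def T6_def)
lemma T6_unit: "z \<in> T6 \<Longrightarrow> cnj z * z = 1"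
  using om_mult by (auto simp: T6_def mult.commute)

lemma Nmat_entry: "Nmat G $ x $ y = (if snd G x y then omega else if snd G y x then cnj omega
                      else if fst G x y then 1 else 0)"
  by (simp add: Nmat_def)

lemma Nmat_facts:
  assumes "mixed_graph G"
  shows "Nmat G $ x $ x = 0"
    and "Nmat G $ y $ x = cnj (Nmat G $ x $ y)"
    and "Nmat G $ x $ y = 0 \<or> Nmat G $ x $ y \<in> S6"
    and "(Nmat G $ x $ y = 0) \<longleftrightarrow> \<not>(fst G x y \<or> snd G x y \<or> snd G y x)"
    and "fst G x y \<Longrightarrow> Nmat G $ x $ y = 1"
    and "snd G x y \<Longrightarrow> Nmat G $ x $ y = omega"
  using assms om_ne unfolding mixed_graph_def Nmat_entry S6_def
  apply (auto split: if_splits)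
  by blast+

lemma rank_comb:
  fixes N :: "complex^'v::finite^'v"
  assumes "rank N = 2" "N$u$v \<noteq> 0" "N$v$u \<noteq> 0" "N$u$u = 0" "N$v$v = 0"
  shows "\<exists>\<alpha> \<beta>. N$r = \<alpha> *s N$u + \<beta> *s N$v"
proof -
  have ne: "N$u \<noteq> N$v" using assms by (metis)
  have nz: "N$v \<noteq> 0" using assms(3) by auto
  have nsp: "N$u \<notin> vec.span {N$v}"
  proof
    assume "N$u \<in> vec.span {N$v}"
    then obtain k where "N$u = k *s N$v" by (auto simp: vec.span_singleton)
    then have "N$u$v = k * N$v$v" by simp
    with assms show False by simp
  qed
  have ind1: "vec.independent {N$v}"
    using nz vec.independent_insertI[of "N$v" "{}"] by auto
  have ind: "vec.independent {N$u, N$v}"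
    by (rule vec.independent_insertI[OF nsp ind1])
  have sub: "{N$u, N$v} \<subseteq> rows N"
    by (auto simp: rows_def row_def)
  have card: "card {N$u, N$v} = vec.dim (rows N)"
    using ne assms(1) by (simp add: row_rank_def_gen)
  have "rows N \<subseteq> vec.span {N$u, N$v}"
    using vec.card_eq_dim[OF sub card] ind by simp
  moreover have "N$r \<in> rows N" by (auto simp: rows_def row_def)
  ultimately have "N$r \<in> vec.span {N$u, N$v}" by blast
  then obtain k where "N$r - k *s N$u \<in> vec.span {N$v}"
    by (auto simp: vec.span_insert)
  then obtain c where "N$r - k *s N$u = c *s N$v"
    by (auto simp: vec.span_singleton)
  then have "N$r = k *s N$u + c *s N$v" by (simp add: algebra_simps)
  then show ?thesis by blast
qed

lemma rank_nz:
  fixes N :: "complex^'v::finite^'v"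
  assumes "rank N = 2"
  shows "\<exists>u v. N$u$v \<noteq> 0"
proof (rule ccontr)
  assume "\<not> ?thesis"
  then have "N = 0" by (simp add: vec_eq_iff)
  then have "rows N = {0}" by (auto simp: rows_def row_def vec_eq_iff)
  then have "vec.dim (rows N) = 0"
    by (metis vec.dim_empty vec.span_empty vec.span_insert_0 vec.span_eq_dim)
  with assms show False by (simp add: row_rank_def_gen)
qed

theorem theorem5p9:
  fixes G :: "('v::finite) mgraph"
  assumes "mixed_graph G" and "rank (Nmat G) = 2"
  shows "\<exists>X Y (a::nat) (b::nat) (t::nat). X \<inter> Y = {} \<and> card X = a \<and> card Y = b \<and>
           card (UNIV - X - Y) = t \<and> a \<ge> 1 \<and> b \<ge> 1 \<and>
           switching_equivalent G (Kbip_iso X Y)"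
proof -
  define N where "N = Nmat G"
  note F = Nmat_facts[OF assms(1), folded N_def]
  obtain u v where uv: "N$u$v \<noteq> 0" using rank_nz assms(2) N_def by blast
  have vu: "N$v$u \<noteq> 0" using uv F(2)[of u v] by simp
  have uvS: "N$u$v \<in> S6" using uv F(3) by blast
  have comb: "\<And>r. \<exists>\<alpha> \<beta>. \<forall>w. N$r$w = \<alpha> * N$u$w + \<beta> * N$v$w"
  proof -
    fix r
    obtain \<alpha> \<beta> where "N$r = \<alpha> *s N$u + \<beta> *s N$v"
      using rank_comb[of N u v r] assms(2) uv vu F(1) N_def by blast
    then show "\<exists>\<alpha> \<beta>. \<forall>w. N$r$w = \<alpha> * N$u$w + \<beta> * N$v$w" by auto
  qed
  define A where "A = {r. N$r$u \<noteq> 0}"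
  define B where "B = {r. N$r$v \<noteq> 0}"
  have coef: "\<And>r. \<exists>\<alpha> \<beta>. (\<forall>w. N$r$w = \<alpha> * N$u$w + \<beta> * N$v$w) \<and>
      \<alpha> = cnj (N$v$r) * N$v$u \<and> \<beta> = N$r$u * N$u$v"
  proof -
    fix r
    obtain \<alpha> \<beta> where ab: "\<forall>w. N$r$w = \<alpha> * N$u$w + \<beta> * N$v$w" using comb by blast
    have "N$r$v = \<alpha> * N$u$v" using ab F(1)[of v] by simp
    then have "N$r$v * N$v$u = \<alpha> * (N$u$v * N$v$u)" by simp
    also have "N$u$v * N$v$u = 1" using F(2)[of u v] S6_unit[OF uvS] by simp
    finally have a: "\<alpha> = cnj (N$v$r) * N$v$u" using F(2)[of v r] by simp
    have "N$r$u = \<beta> * N$v$u" using ab F(1)[of u] by simp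
    then have "N$r$u * N$u$v = \<beta> * (N$u$v * N$v$u)" by simp
    also have "N$u$v * N$v$u = 1" using F(2)[of u v] S6_unit[OF uvS] by simp
    finally have b: "\<beta> = N$r$u * N$u$v" by simp
    show "?thesis r" using ab a b by blast
  qed
  have disj: "A \<inter> B = {}"
  proof (rule ccontr)
    assume "A \<inter> B \<noteq> {}"
    then obtain r where rA: "N$r$u \<noteq> 0" and rB: "N$r$v \<noteq> 0" by (auto simp: A_def B_def)
    obtain \<alpha> \<beta> where ab: "\<forall>w. N$r$w = \<alpha> * N$u$w + \<beta> * N$v$w"
      and a: "\<alpha> = cnj (N$v$r) * N$v$u" and b: "\<beta> = N$r$u * N$u$v" using coef by blast
    have "0 = \<alpha> * N$u$r + \<beta> * N$v$r" using ab F(1)[of r] by simp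
    also have "\<dots> = cnj (N$u$v * N$v$r * N$r$u) + N$u$v * N$v$r * N$r$u"
      using a b F(2)[of u v] F(2)[of u r] F(2)[of v r] by (simp add: algebra_simps)
    finally have "0 = cnj (N$u$v * N$v$r * N$r$u) + N$u$v * N$v$r * N$r$u" .
    then have "Re (N$u$v * N$v$r * N$r$u) = 0"
      by (metis (no_types, lifting) add.commute complex_add_cnj Re_complex_of_real zero_complex.sel(1) mult_eq_0_iff zero_neq_numeral)
    moreover have "N$v$r \<in> S6" "N$r$u \<in> S6" using rA rB F(3) F(2)[of v r] by (metis complex_cnj_zero_iff)+
    ultimately show False using Re3 uvS by blast
  qed
  have unitN: "N$x$y * N$y$x = 1" if "N$x$y \<noteq> 0" for x y
  proof -
    have "N$x$y \<in> S6" using F(3)[of x y] that by blast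
    then have "N$x$y * cnj (N$x$y) = 1" by (rule S6_unit)
    moreover have "N$y$x = cnj (N$x$y)" by (rule F(2))
    ultimately show ?thesis by simp
  qed
  have S6N: "\<And>x y. N$x$y \<noteq> 0 \<Longrightarrow> N$x$y \<in> S6" using F(3) by blast
  have symnz: "N$x$y \<noteq> 0 \<longleftrightarrow> N$y$x \<noteq> 0" for x y using F(2)[of x y] by simp
  have rowA: "\<And>r w. r \<in> A \<Longrightarrow> N$r$w = (N$r$u * N$u$v) * N$v$w"
  proof -
    fix r w assume rA: "r \<in> A"
    then have "r \<notin> B" using disj by blast
    then have "N$v$r = 0" using symnz[of v r] by (auto simp: B_def)
    moreover obtain \<alpha> \<beta> where "N$r$w = \<alpha> * N$u$w + \<beta> * N$v$w"
      "\<alpha> = cnj (N$v$r) * N$v$u" "\<beta> = N$r$u * N$u$v" using coef[of r] by blast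
    ultimately show "N$r$w = (N$r$u * N$u$v) * N$v$w" by simp
  qed
  have rowB: "\<And>r w. r \<in> B \<Longrightarrow> N$r$w = (N$r$v * N$v$u) * N$u$w"
  proof -
    fix r w assume rB: "r \<in> B"
    then have "r \<notin> A" using disj by blast
    then have "N$r$u = 0" by (auto simp: A_def)
    moreover obtain \<alpha> \<beta> where "N$r$w = \<alpha> * N$u$w + \<beta> * N$v$w"
      "\<alpha> = cnj (N$v$r) * N$v$u" "\<beta> = N$r$u * N$u$v" using coef[of r] by blast
    moreover have "cnj (N$v$r) = N$r$v" using F(2)[of r v] by simp
    ultimately show "N$r$w = (N$r$v * N$v$u) * N$u$w" by simp
  qed
  have rowO: "\<And>r w. r \<notin> A \<Longrightarrow> r \<notin> B \<Longrightarrow> N$r$w = 0"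
  proof -
    fix r w assume "r \<notin> A" "r \<notin> B"
    then have "N$r$u = 0" "N$v$r = 0" using symnz[of v r] by (auto simp: A_def B_def)
    moreover obtain \<alpha> \<beta> where "N$r$w = \<alpha> * N$u$w + \<beta> * N$v$w"
      "\<alpha> = cnj (N$v$r) * N$v$u" "\<beta> = N$r$u * N$u$v" using coef[of r] by blast
    ultimately show "N$r$w = 0" by simp
  qed
  have vA: "v \<in> A" using vu by (simp add: A_def)
  have uB: "u \<in> B" using uv by (simp add: B_def)
  have nzchar: "\<And>x y. N$x$y \<noteq> 0 \<longleftrightarrow> (x \<in> A \<and> y \<in> B) \<or> (x \<in> B \<and> y \<in> A)"
  proof -
    fix x y
    show "N$x$y \<noteq> 0 \<longleftrightarrow> (x \<in> A \<and> y \<in> B) \<or> (x \<in> B \<and> y \<in> A)"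
    proof (cases "x \<in> A")
      case True
      then have "x \<notin> B" using disj by blast
      have "N$x$u * N$u$v \<noteq> 0" using True uv by (simp add: A_def)
      then have "N$x$y \<noteq> 0 \<longleftrightarrow> N$v$y \<noteq> 0" using rowA[OF True, of y] by simp
      also have "\<dots> \<longleftrightarrow> y \<in> B" using symnz[of v y] by (simp add: B_def)
      finally show ?thesis using True \<open>x \<notin> B\<close> by blast
    next
      case False
      show ?thesis
      proof (cases "x \<in> B")
        case True
        have "N$x$v * N$v$u \<noteq> 0" using True vu by (simp add: B_def)
        then have "N$x$y \<noteq> 0 \<longleftrightarrow> N$u$y \<noteq> 0" using rowB[OF True, of y] by simp
        also have "\<dots> \<longleftrightarrow> y \<in> A" using symnz[of u y] by (simp add: A_def)
        finally show ?thesis using True False by blast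
      next
        case False2: False
        then show ?thesis using rowO False by auto
      qed
    qed
  qed
  define p where "p r = (if r \<in> A then N$r$u * N$u$v else if r \<in> B then cnj (N$v$r) else 1)" for r
  have pT6: "\<And>r. p r \<in> T6"
  proof -
    fix r
    show "p r \<in> T6"
    proof (cases "r \<in> A")
      case True
      then show ?thesis using T6_2 S6N uvS by (simp add: p_def A_def)
    next
      case False
      then show ?thesis
        using symnz[of v r] by (cases "r \<in> B") (auto simp: p_def B_def one_S6 intro!: T6_1 S6_cnj S6N)
    qed
  qed
  have punit: "\<And>r. cnj (p r) * p r = 1" using pT6 T6_unit by blast
  have pnz: "p r \<noteq> 0" for r using punit[of r] by auto
  have phase: "\<And>x y. N$x$y \<noteq> 0 \<Longrightarrow> cnj (p x) * N$x$y * p y = 1"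
  proof -
    fix x y assume nz: "N$x$y \<noteq> 0"
    then consider "x \<in> A" "y \<in> B" | "x \<in> B" "y \<in> A" using nzchar by blast
    then show "cnj (p x) * N$x$y * p y = 1"
    proof cases
      case 1
      then have ny: "y \<notin> A" using disj by blast
      have "cnj (p x) * N$x$y * p y = (N$v$u * N$u$x) * (N$x$u * N$u$v * N$v$y) * N$y$v"
        using 1 ny rowA[of x y] F(2)[of x u] F(2)[of u v] F(2)[of y v]
        by (simp add: p_def)
      also have "\<dots> = (N$x$u * N$u$x) * (N$u$v * N$v$u) * (N$v$y * N$y$v)"
        by (simp only: mult_ac)
      also have "\<dots> = 1" using 1 uv unitN[of x u] unitN[of u v] unitN[of v y] symnz[of y v] by (simp add: A_def B_def)
      finally show ?thesis .
    next
      case 2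
      then have nx: "x \<notin> A" using disj by blast
      have "cnj (p x) * N$x$y * p y = N$v$x * (N$x$v * N$v$u * N$u$y) * (N$y$u * N$u$v)"
        using 2 nx rowB[of x y] F(2)[of x v]
        by (simp add: p_def)
      also have "\<dots> = (N$x$v * N$v$x) * (N$u$v * N$v$u) * (N$u$y * N$y$u)"
        by (simp only: mult_ac)
      also have "\<dots> = 1" using 2 uv unitN[of x v] unitN[of u v] unitN[of u y] symnz[of y u] by (simp add: A_def B_def)
      finally show ?thesis .
    qed
  qed
  have pfst: "\<And>x y. fst G x y \<Longrightarrow> p y = p x"
  proof -
    fix x y assume "fst G x y"
    then have "N$x$y = 1" using F(5) by blast
    then have "cnj (p x) * p y = 1" using phase[of x y] by simp
    have "p y = (cnj (p x) * p x) * p y" using punit[of x] by simp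
    also have "\<dots> = p x * (cnj (p x) * p y)" by (simp only: mult_ac)
    also have "\<dots> = p x" using \<open>cnj (p x) * p y = 1\<close> by simp
    finally show "p y = p x" .
  qed
  have psnd: "\<And>x y. snd G x y \<Longrightarrow> p y = cnj omega * p x"
  proof -
    fix x y assume "snd G x y"
    then have "N$x$y = omega" using F(6) by blast
    then have "cnj (p x) * omega * p y = 1" using phase[of x y] by (simp add: om_ne)
    have "p y = (cnj (p x) * p x) * (omega * cnj omega) * p y" using punit[of x] om_mult by simp
    also have "\<dots> = (p x * cnj omega) * (cnj (p x) * omega * p y)" by (simp only: mult_ac)
    also have "\<dots> = p x * cnj omega" using \<open>cnj (p x) * omega * p y = 1\<close> by simp
    finally show "p y = cnj omega * p x" by (simp add: mult.commute)
  qed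
  have adm: "admissible p G"
    unfolding admissible_def using pT6 pfst psnd by metis
  have nzG: "\<And>x y. N$x$y \<noteq> 0 \<longleftrightarrow> fst G x y \<or> snd G x y \<or> snd G y x" using F(4) by blast
  have sw: "three_way_switch p G = Kbip_iso A B"
  proof -
    have f: "(fst G x y \<and> \<not> (p y = omega * p x) \<and> \<not> (p x = omega * p y))
          \<or> (snd G x y \<and> p y = cnj omega * p x)
          \<or> (snd G y x \<and> p x = cnj omega * p y) \<longleftrightarrow> (x \<in> A \<and> y \<in> B) \<or> (x \<in> B \<and> y \<in> A)" for x y
    proof -
      have "fst G x y \<Longrightarrow> \<not> (p y = omega * p x) \<and> \<not> (p x = omega * p y)"
        using pfst[of x y] pnz[of x] om_ne by auto
      then show ?thesis using nzchar[of x y] nzG[of x y] psnd[of x y] psnd[of y x] by blast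
    qed
    have s: "\<not> ((snd G x y \<and> p y = p x)
          \<or> (fst G x y \<and> p y = omega * p x)
          \<or> (snd G y x \<and> p x = - omega * p y))" for x y
    proof -
      have "snd G x y \<Longrightarrow> p y \<noteq> p x" using psnd[of x y] pnz[of x] om_ne by auto
      moreover have "fst G x y \<Longrightarrow> p y \<noteq> omega * p x" using pfst[of x y] pnz[of x] om_ne by auto
      moreover have "snd G y x \<Longrightarrow> p x \<noteq> - omega * p y"
        using psnd[of y x] pnz[of y] om_ne(4) mult_right_cancel[of "p y" "cnj omega" "- omega"] by auto
      ultimately show ?thesis by blast
    qed
    show ?thesis unfolding three_way_switch_def Kbip_iso_def
      by (simp only: prod_eq_iff fst_conv snd_conv) (intro conjI ext; use f s in blast)
  qed
  have "switch_step G (Kbip_iso A B)" unfolding switch_step_def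
    by (rule disjI1, rule exI[of _ p]) (use adm sw in simp)
  then have se: "switching_equivalent G (Kbip_iso A B)"
    unfolding switching_equivalent_def by (blast intro: r_into_rtranclp)
  have cA: "card A \<ge> 1" using vA by (auto simp: Suc_le_eq card_gt_0_iff)
  have cB: "card B \<ge> 1" using uB by (auto simp: Suc_le_eq card_gt_0_iff)
  show ?thesis
    apply (rule exI[of _ A], rule exI[of _ B], rule exI[of _ "card A"], rule exI[of _ "card B"],
        rule exI[of _ "card (UNIV - A - B)"])
    using disj cA cB se by simp
qed
end
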